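(* Let $\mathbf{A}\in\mathbb{R}^{n_x\times n_x}$, $\mathbf{B}\in\mathbb{R}^{n_x\times n_u}$, $\mathbf{c}\in\mathbb{R}^{n_x}$, and consider the closed-loop discrete-time system $\mathbf{x}_{t+1}=\mathbf{A}\mathbf{x}_t+\mathbf{B}\pi(\mathbf{x}_t)+\mathbf{c}$, where $\pi:\mathbb{R}^{n_x}\to\mathbb{R}^{n_u}$ is an $m$-layer feedforward neural network control policy with $\pi(\mathbf{x})\in\mathcal{U}$ for all $\mathbf{x}$. Let $\mathcal{U}\subseteq\mathbb{R}^{n_u}$ and $\mathcal{X}\subseteq\mathbb{R}^{n_x}$ be convex sets and let $\mathcal{X}_T\subseteq\mathbb{R}^{n_x}$ be a convex target set. Fix a horizon $\tau\geq 1$, let $\mathcal{T}=\{-\tau,\dots,-1\}$, and let $\bar{\mathcal{P}}_t$ ($t\in\mathcal{T}$) be the sets produced by the construction described in the context (with $\bar{\mathcal{P}}_0=\mathcal{X}_T$). Then for every $t\in\mathcal{T}$, $$\mathcal{P}_t(\mathcal{X}_T)\subseteq\bar{\mathcal{P}}_t(\mathcal{X}_T)=\{\mathbf{x}\mid \underline{\mathbf{x}}_t\leq\mathbf{x}\leq\bar{\mathbf{x}}_t\}.$$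
   Context: States are constrained to the operating region $\mathcal{X}$. True backprojection (BP) sets: $\mathcal{P}_0(\mathcal{X}_T)=\mathcal{X}_T$ and, for $t\in\mathcal{T}$, $\mathcal{P}_t(\mathcal{X}_T)=\{\mathbf{x}\in\mathcal{X}\mid \mathbf{A}\mathbf{x}+\mathbf{B}\pi(\mathbf{x})+\mathbf{c}\in\mathcal{P}_{t+1}(\mathcal{X}_T)\}$, i.e. the states from which the closed-loop system (staying in $\mathcal{X}$) reaches $\mathcal{X}_T$ at time $0$. $\mathbf{e}_k$ denotes the $k$-th standard basis vector, inequalities between vectors are componentwise, and an infeasible optimization problem yields the empty set. Construction, recursively for $t=-1,-2,\dots,-\tau$, with $\bar{\mathcal{P}}_0=\mathcal{X}_T$: (1) Backreachable over-approximation: for each $k\in\{1,\dots,n_x\}$ let $\underline{\underline{\mathbf{x}}}_{t;k}$ (resp. $\bar{\bar{\mathbf{x}}}_{t;k}$) be the minimum (resp. maximum) of $\mathbf{e}_k^\top\mathbf{x}_t$ over all $(\mathbf{x}_t,\mathbf{u}_t)$ satisfying $\mathbf{A}\mathbf{x}_t+\mathbf{B}\mathbf{u}_t+\mathbf{c}\in\bar{\mathcal{P}}_{t+1}$, $\mathbf{u}_t\in\mathcal{U}$, $\mathbf{x}_t\in\mathcal{X}$; set $\bar{\mathcal{R}}_t=\{\mathbf{x}\mid\underline{\underline{\mathbf{x}}}_t\le\mathbf{x}\le\bar{\bar{\mathbf{x}}}_t\}$. (2) Relaxation of the network: affine functions $\pi^L_t(\mathbf{x})=\mathbf{\Phi}_t\mathbf{x}+\boldsymbol{\beta}_t$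 and $\pi^U_t(\mathbf{x})=\mathbf{\Psi}_t\mathbf{x}+\boldsymbol{\alpha}_t$ (e.g. obtained by the CROWN relaxation) satisfying $\pi^L_t(\mathbf{x})\le\pi(\mathbf{x})\le\pi^U_t(\mathbf{x})$ for all $\mathbf{x}\in\bar{\mathcal{R}}_t$. (3) BP over-approximation: for each $k$, let $\underline{\mathbf{x}}_{t;k}$ (resp. $\bar{\mathbf{x}}_{t;k}$) be the minimum (resp. maximum) of $\mathbf{e}_k^\top\mathbf{x}_t$ over all variables $\mathbf{x}_t,\dots,\mathbf{x}_{0}$, $\mathbf{u}_t,\dots,\mathbf{u}_{-1}$ satisfying, for every $i\in\{t,\dots,-1\}$: $\mathbf{x}_i\in\bar{\mathcal{R}}_i$, $\pi^L_i(\mathbf{x}_i)\le\mathbf{u}_i\le\pi^U_i(\mathbf{x}_i)$, $\mathbf{x}_{i+1}=\mathbf{A}\mathbf{x}_i+\mathbf{B}\mathbf{u}_i+\mathbf{c}$, and $\mathbf{x}_{i+1}\in\bar{\mathcal{P}}_{i+1}$; set $\bar{\mathcal{P}}_t=\{\mathbf{x}\mid\underline{\mathbf{x}}_t\le\mathbf{x}\le\bar{\mathbf{x}}_t\}$. *)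

theory Defs
  imports "HOL-Analysis.Analysis"
begin

text \<open>Hidden layers are represented as functions nat => real, entries i >= d l being 0.\<close>

fun nn_hidden :: "(real \<Rightarrow> real) \<Rightarrow> (nat \<Rightarrow> nat) \<Rightarrow> (nat \<Rightarrow> real^'n) \<Rightarrow> (nat \<Rightarrow> real)
    \<Rightarrow> (nat \<Rightarrow> nat \<Rightarrow> nat \<Rightarrow> real) \<Rightarrow> (nat \<Rightarrow> nat \<Rightarrow> real) \<Rightarrow> nat \<Rightarrow> real^'n \<Rightarrow> nat \<Rightarrow> real"
  where
  "nn_hidden \<sigma> d W1 b1 W b 0 x = (\<lambda>i. 0)"
| "nn_hidden \<sigma> d W1 b1 W b (Suc 0) x =
     (\<lambda>i. if i < d 1 then \<sigma> (W1 i \<bullet> x + b1 i) else 0)"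
| "nn_hidden \<sigma> d W1 b1 W b (Suc (Suc l)) x =
     (\<lambda>i. if i < d (Suc (Suc l))
          then \<sigma> ((\<Sum>j<d (Suc l). W (Suc (Suc l)) i j * nn_hidden \<sigma> d W1 b1 W b (Suc l) x j)
                  + b (Suc (Suc l)) i)
          else 0)"

definition ffnn :: "(real \<Rightarrow> real) \<Rightarrow> nat \<Rightarrow> (real^'n \<Rightarrow> real^'m) \<Rightarrow> bool" where
  "ffnn \<sigma> m \<pi> \<longleftrightarrow> m \<ge> 1 \<and>
     (if m = 1 then (\<exists>(Wo::real^'n^'m) bo. \<forall>x. \<pi> x = Wo *v x + bo)
      else (\<exists>d W1 b1 W b (Wo :: 'm \<Rightarrow> nat \<Rightarrow> real) (bo :: real^'m). (\<forall>l. d l > 0) \<and>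
              (\<forall>x. \<pi> x = (\<chi> r. (\<Sum>j<d (m - 1). Wo r j * nn_hidden \<sigma> d W1 b1 W b (m - 1) x j)
                                + bo $ r))))"

text \<open>true_BP A B c \<pi> X XT k is P_{-k}(XT): indexed by k = -t >= 0.\<close>
fun true_BP :: "real^'n^'n \<Rightarrow> real^'m^'n \<Rightarrow> real^'n \<Rightarrow> (real^'n \<Rightarrow> real^'m)
    \<Rightarrow> (real^'n) set \<Rightarrow> (real^'n) set \<Rightarrow> nat \<Rightarrow> (real^'n) set" where
  "true_BP A B c \<pi> X XT 0 = XT"
| "true_BP A B c \<pi> X XT (Suc k) =
     {x \<in> X. A *v x + B *v \<pi> x + c \<in> true_BP A B c \<pi> X XT k}"

definition box_of_opt :: "'v set \<Rightarrow> ('v \<Rightarrow> real^'n) \<Rightarrow> real^'n \<Rightarrow> real^'n \<Rightarrow> (real^'n) set \<Rightarrow> bool" where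
  "box_of_opt F f lo hi S \<longleftrightarrow>
     (if F = {} then S = {}
      else (\<forall>i. (\<exists>v\<in>F. f v $ i = lo $ i) \<and> (\<forall>v\<in>F. lo $ i \<le> f v $ i) \<and>
                 (\<exists>v\<in>F. f v $ i = hi $ i) \<and> (\<forall>v\<in>F. f v $ i \<le> hi $ i)) \<and>
           S = {x. lo \<le> x \<and> x \<le> hi})"

text \<open>Step (1): feasible set of (x_t, u_t) for k = -t, given Pbar_{t+1} = Pnext.\<close>
definition backreach_feas :: "real^'n^'n \<Rightarrow> real^'m^'n \<Rightarrow> real^'n \<Rightarrow> (real^'m) set
    \<Rightarrow> (real^'n) set \<Rightarrow> (real^'n) set \<Rightarrow> ((real^'n) \<times> (real^'m)) set" where
  "backreach_feas A B c U X Pnext =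
     {(x, u). A *v x + B *v u + c \<in> Pnext \<and> u \<in> U \<and> x \<in> X}"

text \<open>A pair (xs, us) encodes x_{-j} = xs j (0 \<le> j \<le> k)
and u_{-j} = us j (1 \<le> j \<le> k); other entries are unconstrained and irrelevant.
Rbar j, Pbar j, Phi j, beta j, Psi j, alpha j stand for the objects with time index -j.\<close>
definition bp_feas :: "real^'n^'n \<Rightarrow> real^'m^'n \<Rightarrow> real^'n \<Rightarrow> (nat \<Rightarrow> (real^'n) set)
    \<Rightarrow> (nat \<Rightarrow> (real^'n) set) \<Rightarrow> (nat \<Rightarrow> real^'n^'m) \<Rightarrow> (nat \<Rightarrow> real^'m)
    \<Rightarrow> (nat \<Rightarrow> real^'n^'m) \<Rightarrow> (nat \<Rightarrow> real^'m) \<Rightarrow> nat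
    \<Rightarrow> ((nat \<Rightarrow> (real^'n)) \<times> (nat \<Rightarrow> (real^'m))) set" where
  "bp_feas A B c Rbar Pbar Phi beta Psi alpha k =
     {(xs, us). \<forall>j\<in>{1..k}.
         xs j \<in> Rbar j \<and>
         Phi j *v xs j + beta j \<le> us j \<and> us j \<le> Psi j *v xs j + alpha j \<and>
         xs (j - 1) = A *v xs j + B *v us j + c \<and>
         xs (j - 1) \<in> Pbar (j - 1)}"

end

theory Submission
  imports Defs
begin


lemma box_mem:
  assumes "box_of_opt F f lo hi S" "v \<in> F"
  shows "f v \<in> S"
proof -
  have ne: "F \<noteq> {}" using assms(2) by blast
  with assms(1) have b: "\<forall>i. lo $ i \<le> f v $ i \<and> f v $ i \<le> hi $ i" and S: "S = {x. lo \<le> x \<and> x \<le> hi}"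
    using assms(2) unfolding box_of_opt_def by auto
  show ?thesis unfolding S using b by (simp add: less_eq_vec_def)
qed

lemma traj_BP:
  assumes "x \<in> true_BP A B c \<pi> X XT k"
  shows "i \<le> k \<Longrightarrow> ((\<lambda>y. A *v y + B *v \<pi> y + c) ^^ i) x \<in> true_BP A B c \<pi> X XT (k - i)"
proof (induction i)
  case 0
  then show ?case using assms by simp
next
  case (Suc i)
  then have h: "((\<lambda>y. A *v y + B *v \<pi> y + c) ^^ i) x \<in> true_BP A B c \<pi> X XT (Suc (k - Suc i))"
    by (metis Suc_diff_Suc Suc_le_lessD less_imp_le_nat)
  show ?case using h by simp
qed

theorem lemma4p1:
  fixes A :: "real^'nx^'nx" and B :: "real^'nu^'nx" and c :: "real^'nx"
    and \<sigma> :: "real \<Rightarrow> real" and m :: nat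
    and \<pi> :: "real^'nx \<Rightarrow> real^'nu"
    and U :: "(real^'nu) set" and X XT :: "(real^'nx) set"
    and \<tau> :: nat
    and Rbar Pbar :: "nat \<Rightarrow> (real^'nx) set"
    and loR hiR loP hiP :: "nat \<Rightarrow> real^'nx"
    and Phi Psi :: "nat \<Rightarrow> real^'nx^'nu" and beta alpha :: "nat \<Rightarrow> real^'nu"
  assumes nn: "ffnn \<sigma> m \<pi>"
    and pi_U: "\<forall>x. \<pi> x \<in> U"
    and convU: "convex U" and convX: "convex X" and convXT: "convex XT"
    and tau: "\<tau> \<ge> 1"
    and P0: "Pbar 0 = XT"
    and step1: "\<forall>k\<in>{1..\<tau>}.
       box_of_opt (backreach_feas A B c U X (Pbar (k - 1))) fst (loR k) (hiR k) (Rbar k)"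
    and step2: "\<forall>k\<in>{1..\<tau>}. \<forall>x\<in>Rbar k.
       Phi k *v x + beta k \<le> \<pi> x \<and> \<pi> x \<le> Psi k *v x + alpha k"
    and step3: "\<forall>k\<in>{1..\<tau>}.
       box_of_opt (bp_feas A B c Rbar Pbar Phi beta Psi alpha k) (\<lambda>(xs, us). xs k)
         (loP k) (hiP k) (Pbar k)"
  shows "\<forall>k\<in>{1..\<tau>}. true_BP A B c \<pi> X XT k \<subseteq> Pbar k"
proof -
  define st where "st = (\<lambda>y. A *v y + B *v \<pi> y + c)"
  have R: "true_BP A B c \<pi> X XT k \<subseteq> Rbar k"
    if kk: "1 \<le> k" "k \<le> \<tau>" "true_BP A B c \<pi> X XT (k - 1) \<subseteq> Pbar (k - 1)" for k
  proof
    fix x assume x: "x \<in> true_BP A B c \<pi> X XT k"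
    obtain k' where k': "k = Suc k'" using kk(1) by (cases k) auto
    have "x \<in> X" "st x \<in> true_BP A B c \<pi> X XT k'" using x unfolding k' st_def by auto
    then have "(x, \<pi> x) \<in> backreach_feas A B c U X (Pbar (k - 1))"
      using kk(3) pi_U unfolding backreach_feas_def st_def k' by auto
    moreover have "box_of_opt (backreach_feas A B c U X (Pbar (k - 1))) fst (loR k) (hiR k) (Rbar k)"
      using step1 kk by auto
    ultimately show "x \<in> Rbar k" using box_mem by fastforce
  qed
  have main: "k \<le> \<tau> \<Longrightarrow> true_BP A B c \<pi> X XT k \<subseteq> Pbar k" for k
  proof (induction k rule: less_induct)
    case (less k)
    show ?case
    proof (cases "k = 0")
      case True
      then show ?thesis using P0 by simp
    next
      case False
      show ?thesis
      proof
        fix x assume x: "x \<in> true_BP A B c \<pi> X XT k"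
        define xs where "xs = (\<lambda>j. (st ^^ (k - j)) x)"
        define us where "us = (\<lambda>j. \<pi> (xs j))"
        have all: "\<forall>j\<in>{1..k}. xs j \<in> Rbar j \<and> Phi j *v xs j + beta j \<le> us j \<and> us j \<le> Psi j *v xs j + alpha j \<and>
             xs (j - 1) = A *v xs j + B *v us j + c \<and> xs (j - 1) \<in> Pbar (j - 1)"
        proof
          fix j assume "j \<in> {1..k}"
          then have j: "1 \<le> j" "j \<le> k" by auto
          have tj: "xs j \<in> true_BP A B c \<pi> X XT j"
            using traj_BP[OF x, of "k - j"] j unfolding xs_def st_def by simp
          have Pj1: "true_BP A B c \<pi> X XT (j - 1) \<subseteq> Pbar (j - 1)"
            using less.IH[of "j - 1"] j less.prems by simp
          have xsR: "xs j \<in> Rbar j" using R[of j] j less.prems Pj1 tj by auto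
          have eq: "xs (j - 1) = A *v xs j + B *v us j + c"
          proof -
            have "k - (j - 1) = Suc (k - j)" using j by simp
            then show ?thesis unfolding xs_def us_def st_def by simp
          qed
          have "xs (j - 1) \<in> true_BP A B c \<pi> X XT (j - 1)"
          proof -
            obtain j' where j': "j = Suc j'" using j(1) by (cases j) auto
            show ?thesis using tj eq unfolding j' us_def by simp
          qed
          then have "xs (j - 1) \<in> Pbar (j - 1)" using Pj1 by auto
          then show "xs j \<in> Rbar j \<and> Phi j *v xs j + beta j \<le> us j \<and> us j \<le> Psi j *v xs j + alpha j \<and>
             xs (j - 1) = A *v xs j + B *v us j + c \<and> xs (j - 1) \<in> Pbar (j - 1)"
            using xsR eq step2 j less.prems unfolding us_def by auto
        qed
        then have "(xs, us) \<in> bp_feas A B c Rbar Pbar Phi beta Psi alpha k"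
          unfolding bp_feas_def using all by (simp only: mem_Collect_eq case_prod_conv)
        moreover have "box_of_opt (bp_feas A B c Rbar Pbar Phi beta Psi alpha k) (\<lambda>(xs, us). xs k)
         (loP k) (hiP k) (Pbar k)" using step3 False less.prems by auto
        ultimately have "(\<lambda>(xs, us). xs k) (xs, us) \<in> Pbar k" by (rule box_mem[rotated])
        then show "x \<in> Pbar k" unfolding xs_def by simp
      qed
    qed
  qed
  show ?thesis using main by auto
qed

end
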